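(* Let $L\ge3$, $m\ge1$, $x_1>\cdots>x_N$ real, $\mathbf X=(x_1,\dots,x_N)^T$. Let $A_{L,\mathrm{par}}(\mathbf X)$ be the set of all vectors obtainable as the (sign-normalized) output of a single sign-activated unit with hidden widths $m_1=\cdots=m_{L-2}=m$ and $m_{L-1}=1$. Then $A_{L,\mathrm{par}}(\mathbf X)$ contains every vector of $\mathcal H^{(m)}$.
   Context: $\sigma(x)=\mathrm{sign}(x)$ with $\mathrm{sign}(x)=1$ if $x\ge0$, $-1$ if $x<0$, applied entrywise. A single unit with widths $m_0=1,m_1,\dots,m_{L-1}=1$ maps $\mathbf X$ to $\mathbf X^{(L)}$ via $\mathbf X^{(1)}=\mathbf X$ and $\mathbf X^{(l+1)}=\sigma(\mathbf X^{(l)}\mathbf W^{(l)}+\mathbf 1\mathbf b^{(l)})\in\{-1,1\}^{N\times m_l}$ for $l\in[L-1]$, with arbitrary $\mathbf W^{(l)}\in\mathbb R^{m_{l-1}\times m_l}$, $\mathbf b^{(l)}\in\mathbb R^{1\times m_l}$. $A_{L,\mathrm{par}}(\mathbf X)$ is the set of all vectors $\epsilon\mathbf X^{(L)}\in\{-1,1\}^N$ over all such weights and biases, where $\epsilon\in\{-1,1\}$ is chosen so that the first entry is $1$. A vector $\mathbf h\in\{-1,1\}^N$ switches at $n>1$ if $h_n\neq h_{n-1}$; $\mathcal H^{(K)}$ is the set of vectors in $\{-1,1\}^N$ with first entry $1$ that switch at most $K$ times. *)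

theory Defs
  imports Complex_Main
begin

definition sgn_act :: "real \<Rightarrow> real" where
  "sgn_act t = (if t \<ge> 0 then 1 else -1)"

definition layer :: "nat \<Rightarrow> nat \<Rightarrow> (nat \<Rightarrow> nat \<Rightarrow> real) \<Rightarrow> (nat \<Rightarrow> real) \<Rightarrow> (nat \<Rightarrow> real) \<Rightarrow> (nat \<Rightarrow> real)" where
  "layer p q W b v = (\<lambda>j. if j < q then sgn_act ((\<Sum>i<p. v i * W i j) + b j) else 0)"

text \<open>ws = [m_0, m_1, ..., m_(L-1)]; W k, b k are the weights/bias of layer k+1.
  fwd ws W b k v applies the first k layers.\<close>
fun fwd :: "nat list \<Rightarrow> (nat \<Rightarrow> nat \<Rightarrow> nat \<Rightarrow> real) \<Rightarrow> (nat \<Rightarrow> nat \<Rightarrow> real) \<Rightarrow> nat \<Rightarrow> (nat \<Rightarrow> real) \<Rightarrow> (nat \<Rightarrow> real)" where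
  "fwd ws W b 0 v = v"
| "fwd ws W b (Suc k) v = layer (ws ! k) (ws ! Suc k) (W k) (b k) (fwd ws W b k v)"

definition unit_out :: "nat list \<Rightarrow> (nat \<Rightarrow> nat \<Rightarrow> nat \<Rightarrow> real) \<Rightarrow> (nat \<Rightarrow> nat \<Rightarrow> real) \<Rightarrow> real \<Rightarrow> real" where
  "unit_out ws W b x = fwd ws W b (length ws - 1) (\<lambda>i. if i = 0 then x else 0) 0"

text \<open>A_par: all sign-normalised output vectors (rows processed independently,
  which is exactly the row-wise action of X W + 1 b).\<close>
definition A_par :: "nat list \<Rightarrow> real list \<Rightarrow> real list set" where
  "A_par ws xs = {map (\<lambda>t. hd out * t) out | out.
      \<exists>W b. out = map (unit_out ws W b) xs}"

definition switches :: "real list \<Rightarrow> nat set" where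
  "switches h = {n. 0 < n \<and> n < length h \<and> h ! n \<noteq> h ! (n - 1)}"

definition H_switch :: "nat \<Rightarrow> nat \<Rightarrow> real list set" where
  "H_switch K N = {h. length h = N \<and> set h \<subseteq> {-1, 1} \<and> h ! 0 = 1 \<and> card (switches h) \<le> K}"

end

theory Submission
  imports Defs
begin

lemma altsum: "1 - 2 * (\<Sum>j<c. (-1::real)^j) = (-1)^c"
  by (induction c) auto

lemma sgn_pm: "sgn_act ((-1::real)^c) = (-1)^c"
  unfolding sgn_act_def by (cases "even c") auto

lemma sgn_pm1: "v \<in> {-1, 1::real} \<Longrightarrow> sgn_act v = v"
  unfolding sgn_act_def by auto

theorem proposition10:
  fixes L m :: nat and xs :: "real list"
  assumes "L \<ge> 3" and "m \<ge> 1"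
    and "xs \<noteq> []" and "sorted_wrt (>) xs"
  shows "H_switch m (length xs) \<subseteq> A_par ([1] @ replicate (L - 2) m @ [1]) xs"
proof
  fix h assume hH: "h \<in> H_switch m (length xs)"
  define N where "N = length xs"
  define ws where "ws = [1] @ replicate (L - 2) m @ [1]"
  define S where "S = switches h"
  have hlen: "length h = N" and hset: "set h \<subseteq> {-1, 1}" and h0: "h ! 0 = 1"
    and cardS: "card S \<le> m"
    using hH unfolding H_switch_def S_def N_def by auto
  have Sfin: "finite S" unfolding S_def switches_def by auto
  define c where "c i = card {n \<in> S. n \<le> i}" for i
  have cmono: "c i \<le> c j" if "i \<le> j" for i j
    unfolding c_def using that Sfin by (intro card_mono) auto
  have cle: "c i \<le> m" for i
  proof -
    have "c i \<le> card S" unfolding c_def using Sfin by (intro card_mono) auto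
    then show ?thesis using cardS by simp
  qed
  have c0: "c 0 = 0" unfolding c_def S_def switches_def by auto
  have cSuc: "c (Suc i) = c i + (if Suc i \<in> S then 1 else 0)" for i
  proof -
    have "{n \<in> S. n \<le> Suc i} = (if Suc i \<in> S then insert (Suc i) {n \<in> S. n \<le> i} else {n \<in> S. n \<le> i})"
      using le_SucE by auto
    then show ?thesis unfolding c_def using Sfin by auto
  qed
  have hpar: "i < N \<longrightarrow> h ! i = (-1)^(c i)" for i
  proof (induction i)
    case 0 then show ?case using h0 c0 by simp
  next
    case (Suc i)
    show ?case
    proof
      assume iN: "Suc i < N"
      have IH: "h ! i = (-1)^(c i)" using Suc iN by simp
      have "Suc i < length h" "i < length h" using iN hlen by auto
      then have mem: "h ! Suc i \<in> {-1, 1}" "h ! i \<in> {-1,1}" using hset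
        by (meson nth_mem subsetD)+
      show "h ! Suc i = (-1)^(c (Suc i))"
      proof (cases "Suc i \<in> S")
        case True
        then have "h ! Suc i \<noteq> h ! i" unfolding S_def switches_def by auto
        then have "h ! Suc i = - h ! i" using mem by auto
        then show ?thesis using IH cSuc True by simp
      next
        case False
        then have "h ! Suc i = h ! i" unfolding S_def switches_def using iN hlen by auto
        then show ?thesis using IH cSuc False by simp
      qed
    qed
  qed
  define P where "P j = {i. i < N \<and> c i \<le> j}" for j
  define p where "p j = Max (P j)" for j
  define t where "t j = xs ! p j" for j
  have Pne: "0 \<in> P j" for j unfolding P_def N_def using c0 assms(3) by auto
  have Pfin: "finite (P j)" for j unfolding P_def by auto
  have pP: "p j \<in> P j" for j unfolding p_def using Pne[of j] Pfin[of j] by (intro Max_in) auto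
  have slt: "xs ! i > xs ! k" if "i < k" "k < N" for i k
    using sorted_wrt_nth_less[OF assms(4) that[unfolded N_def]] .
  have thr: "xs ! i \<ge> t j \<longleftrightarrow> c i \<le> j" if iN: "i < N" for i j
  proof
    assume "c i \<le> j"
    then have "i \<in> P j" using iN unfolding P_def by auto
    then have "i \<le> p j" unfolding p_def using Pfin by auto
    moreover have "p j < N" using pP unfolding P_def by auto
    ultimately show "xs ! i \<ge> t j" unfolding t_def using slt
      by (metis le_neq_implies_less order.order_iff_strict)
  next
    assume a: "xs ! i \<ge> t j"
    have pj: "p j < N" "c (p j) \<le> j" using pP unfolding P_def by auto
    show "c i \<le> j"
    proof (rule ccontr)
      assume "\<not> c i \<le> j"
      then have "\<not> i \<le> p j" using cmono pj by (meson le_trans)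
      then have "xs ! i < t j" unfolding t_def using slt iN by auto
      then show False using a by simp
    qed
  qed
  define A where "A = (\<Sum>j<m. (-1::real)^j)"
  define W :: "nat \<Rightarrow> nat \<Rightarrow> nat \<Rightarrow> real" where
    "W k i j = (if k = 0 then 1 else if k < L - 2 then (if i = j then 1 else 0) else (-1)^i)" for k i j
  define b :: "nat \<Rightarrow> nat \<Rightarrow> real" where
    "b k j = (if k = 0 then - t j else if k < L - 2 then 0 else 1 - A)" for k j
  have wslen: "length ws = L" unfolding ws_def using assms(1) by simp
  have ws0: "ws ! 0 = 1" unfolding ws_def by simp
  have wsm: "ws ! k = m" if "1 \<le> k" "k \<le> L - 2" for k
  proof -
    have "ws ! k = (replicate (L - 2) m @ [1]) ! (k - 1)" unfolding ws_def using that
      by (cases k) auto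
    also have "\<dots> = m"
    proof -
      have "k - 1 < L - 2" using that by linarith
      then show ?thesis by (simp add: nth_append)
    qed
    finally show ?thesis .
  qed
  have wslast: "ws ! (L - 1) = 1"
  proof -
    have "ws = (1 # replicate (L - 2) m) @ [1]" unfolding ws_def by simp
    moreover have "length (1 # replicate (L - 2) m) = L - 1" using assms(1) by simp
    ultimately show ?thesis by (metis nth_append_length)
  qed
  define g where "g x = (\<lambda>j. if j < m then sgn_act (x - t j) else (0::real))" for x
  have mid: "1 \<le> k \<longrightarrow> k \<le> L - 2 \<longrightarrow> fwd ws W b k (\<lambda>i. if i = 0 then x else 0) = g x" for k x
  proof (induction k)
    case 0 then show ?case by simp
  next
    case (Suc k)
    show ?case
    proof (intro impI)
      assume k2: "Suc k \<le> L - 2"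
      show "fwd ws W b (Suc k) (\<lambda>i. if i = 0 then x else 0) = g x"
      proof (cases "k = 0")
        case True
        then show ?thesis using k2 ws0 wsm[of 1]
          by (auto simp: layer_def W_def b_def g_def fun_eq_iff)
      next
        case False
        then have IH: "fwd ws W b k (\<lambda>i. if i = 0 then x else 0) = g x" using Suc k2 by simp
        have sm: "(\<Sum>i<m. g x i * W k i j) = g x j" if "j < m" for j
        proof -
          have "(\<Sum>i<m. g x i * W k i j) = (\<Sum>i<m. if i = j then g x i else 0)"
            using False k2 by (intro sum.cong) (auto simp: W_def)
          also have "\<dots> = g x j" using that by (simp add: sum.delta)
          finally show ?thesis .
        qed
        have gpm: "g x j \<in> {-1, 1}" if "j < m" for j
          using that unfolding g_def sgn_act_def by auto
        have gz: "g x j = 0" if "\<not> j < m" for j using that unfolding g_def by simp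
        have e: "fwd ws W b (Suc k) (\<lambda>i. if i = 0 then x else 0) = layer m m (W k) (b k) (g x)"
          using IH wsm[of k] wsm[of "Suc k"] False k2 by simp
        show ?thesis unfolding e layer_def using False k2 sm gpm gz
          by (auto simp: b_def fun_eq_iff sgn_pm1)
      qed
    qed
  qed
  have outv: "unit_out ws W b (xs ! i) = h ! i" if iN: "i < N" for i
  proof -
    define x where "x = xs ! i"
    have L1: "length ws - 1 = Suc (L - 2)" using wslen assms(1) by simp
    have f: "fwd ws W b (L - 2) (\<lambda>i. if i = 0 then x else 0) = g x"
      using mid[of "L - 2" x] assms(1) by simp
    have gx: "g x j = 1 - 2 * (if j < c i then 1 else 0)" if "j < m" for j
      using that thr[OF iN, of j] unfolding g_def sgn_act_def x_def by auto
    have "(\<Sum>j<m. g x j * W (L - 2) j 0) = (\<Sum>j<m. (-1)^j - 2 * (if j < c i then (-1)^j else 0))"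
      using assms(1) by (intro sum.cong) (auto simp: gx W_def)
    also have "\<dots> = A - 2 * (\<Sum>j<m. if j < c i then (-1::real)^j else 0)"
      by (simp add: sum_subtractf sum_distrib_left A_def)
    also have "(\<Sum>j<m. if j < c i then (-1::real)^j else 0) = (\<Sum>j<c i. (-1::real)^j)"
    proof -
      have e: "{j. j < m \<and> j < c i} = {..<c i}" using cle[of i] by auto
      have "(\<Sum>j<m. if j < c i then (-1::real)^j else 0) = (\<Sum>j | j < m \<and> j < c i. (-1::real)^j)"
        by (simp add: sum.inter_filter[symmetric])
      then show ?thesis using e by simp
    qed
    finally have s: "(\<Sum>j<m. g x j * W (L - 2) j 0) + b (L - 2) 0 = (-1)^(c i)"
      using altsum[of "c i"] assms(1) by (simp add: b_def)
    have "unit_out ws W b x = layer m 1 (W (L - 2)) (b (L - 2)) (g x) 0"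
    proof -
      have "Suc (L - 2) = L - 1" using assms(1) by simp
      then have "ws ! Suc (L - 2) = 1" using wslast by simp
      moreover have "ws ! (L - 2) = m" using wsm[of "L - 2"] assms(1) by simp
      ultimately show ?thesis unfolding unit_out_def L1 using f by simp
    qed
    also have "\<dots> = (-1)^(c i)" unfolding layer_def using s sgn_pm by simp
    finally show ?thesis using hpar iN x_def by simp
  qed
  have "h = map (unit_out ws W b) xs"
    using hlen outv by (intro nth_equalityI) (auto simp: N_def)
  moreover have "hd h = 1" using h0 hlen assms(3) unfolding N_def
    by (metis hd_conv_nth length_0_conv)
  ultimately have "h = map (\<lambda>t. hd h * t) h \<and> (\<exists>W b. h = map (unit_out ws W b) xs)" by auto
  then show "h \<in> A_par ([1] @ replicate (L - 2) m @ [1]) xs"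
    unfolding A_par_def ws_def by blast
qed

end
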